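(* Let $(\mathfrak g,J)$ be a real Lie algebra with integrable complex structure, let $(E,I)$ be a real vector space with complex structure, and let $\rho:\mathfrak g\to\operatorname{End}E$ be a representation. Then the following are equivalent: (i) $\rho$ is integrable, i.e. $\mathcal N(x):=[I,\rho(Jx)]+I[\rho(x),I]=0$ for all $x\in\mathfrak g$; (ii) for all $X\in\mathfrak g^{1,0}$ the map $\rho(X)$ has no component in $\operatorname{Hom}(E^{1,0},E^{0,1})$; (iii) $E^{1,0}$ is invariant under the action of $\mathfrak g^{1,0}$; (iv) $\rho|_{\mathfrak g^{1,0}}$ induces by restriction a $\mathbb C$-linear representation of $\mathfrak g^{1,0}$ on $E^{1,0}$.
   Context: A complex structure on a real Lie algebra $\mathfrak g$ is $J\in\operatorname{End}\mathfrak g$ with $J^2=-\mathrm{id}$ and $[x,y]-[Jx,Jy]+J[Jx,y]+J[x,Jy]=0$ for all $x,y$. $\mathfrak g_{\mathbb C}=\mathfrak g^{1,0}\oplus\mathfrak g^{0,1}$ and $E_{\mathbb C}=E^{1,0}\oplus E^{0,1}$ denote the $\pm i$-eigenspace decompositions of the $\mathbb C$-linear extensions of $J$ and $I$; $\rho$ is extended $\mathbb C$-linearly to $\mathfrak g_{\mathbb C}\to\operatorname{End}E_{\mathbb C}$. *)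

theory Defs
  imports "HOL-Analysis.Analysis"
begin

(* Real Lie algebras are modelled by a real vector space type with a bracket
  operation; the complexification V_C = V \<otimes> C is modelled as pairs (x,y) = x + i y. *)

definition real_lie_algebra :: "('g::real_vector \<Rightarrow> 'g \<Rightarrow> 'g) \<Rightarrow> bool" where
  "real_lie_algebra br \<longleftrightarrow>
     (\<forall>x. linear (br x)) \<and> (\<forall>y. linear (\<lambda>x. br x y)) \<and>
     (\<forall>x y. br x y = - br y x) \<and>
     (\<forall>x y z. br x (br y z) + br y (br z x) + br z (br x y) = 0)"

definition complex_structure :: "('a::real_vector \<Rightarrow> 'a) \<Rightarrow> bool" where
  "complex_structure J \<longleftrightarrow> linear J \<and> (\<forall>x. J (J x) = - x)"

definition integrable_complex_structure ::
  "('g::real_vector \<Rightarrow> 'g \<Rightarrow> 'g) \<Rightarrow> ('g \<Rightarrow> 'g) \<Rightarrow> bool" where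
  "integrable_complex_structure br J \<longleftrightarrow> complex_structure J \<and>
     (\<forall>x y. br x y - br (J x) (J y) + J (br (J x) y) + J (br x (J y)) = 0)"

definition comm :: "('e::ab_group_add \<Rightarrow> 'e) \<Rightarrow> ('e \<Rightarrow> 'e) \<Rightarrow> 'e \<Rightarrow> 'e" where
  "comm A B = (\<lambda>v. A (B v) - B (A v))"

definition representation ::
  "('g::real_vector \<Rightarrow> 'g \<Rightarrow> 'g) \<Rightarrow> ('g \<Rightarrow> 'e::real_vector \<Rightarrow> 'e) \<Rightarrow> bool" where
  "representation br \<rho> \<longleftrightarrow> (\<forall>v. linear (\<lambda>x. \<rho> x v)) \<and> (\<forall>x. linear (\<rho> x)) \<and>
     (\<forall>x y. \<rho> (br x y) = comm (\<rho> x) (\<rho> y))"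

definition nijenhuis_rep ::
  "('g \<Rightarrow> 'g) \<Rightarrow> ('e::ab_group_add \<Rightarrow> 'e) \<Rightarrow> ('g \<Rightarrow> 'e \<Rightarrow> 'e) \<Rightarrow> 'g \<Rightarrow> 'e \<Rightarrow> 'e" where
  "nijenhuis_rep J I \<rho> x = (\<lambda>v. comm I (\<rho> (J x)) v + I (comm (\<rho> x) I v))"

definition integrable_rep ::
  "('g \<Rightarrow> 'g) \<Rightarrow> ('e::ab_group_add \<Rightarrow> 'e) \<Rightarrow> ('g \<Rightarrow> 'e \<Rightarrow> 'e) \<Rightarrow> bool" where
  "integrable_rep J I \<rho> \<longleftrightarrow> (\<forall>x v. nijenhuis_rep J I \<rho> x v = 0)"

definition cscale :: "complex \<Rightarrow> 'a::real_vector \<times> 'a \<Rightarrow> 'a \<times> 'a" where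
  "cscale c w = (Re c *\<^sub>R fst w - Im c *\<^sub>R snd w, Im c *\<^sub>R fst w + Re c *\<^sub>R snd w)"

definition cext :: "('a \<Rightarrow> 'b) \<Rightarrow> 'a \<times> 'a \<Rightarrow> 'b \<times> 'b" where
  "cext L w = (L (fst w), L (snd w))"

definition bracketC :: "('g::ab_group_add \<Rightarrow> 'g \<Rightarrow> 'g) \<Rightarrow> 'g \<times> 'g \<Rightarrow> 'g \<times> 'g \<Rightarrow> 'g \<times> 'g" where
  "bracketC br X Y = (br (fst X) (fst Y) - br (snd X) (snd Y),
                     br (fst X) (snd Y) + br (snd X) (fst Y))"

definition rhoC :: "('g \<Rightarrow> 'e::ab_group_add \<Rightarrow> 'e) \<Rightarrow> 'g \<times> 'g \<Rightarrow> 'e \<times> 'e \<Rightarrow> 'e \<times> 'e" where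
  "rhoC \<rho> X w = (\<rho> (fst X) (fst w) - \<rho> (snd X) (snd w),
                  \<rho> (fst X) (snd w) + \<rho> (snd X) (fst w))"

(* The +i eigenspace V^{1,0} and -i eigenspace V^{0,1} of the extension of J. *)
definition hol_part :: "('a::real_vector \<Rightarrow> 'a) \<Rightarrow> ('a \<times> 'a) set" where
  "hol_part J = {w. cext J w = cscale \<i> w}"

definition antihol_part :: "('a::real_vector \<Rightarrow> 'a) \<Rightarrow> ('a \<times> 'a) set" where
  "antihol_part J = {w. cext J w = cscale (- \<i>) w}"

definition proj10 :: "('a::real_vector \<Rightarrow> 'a) \<Rightarrow> 'a \<times> 'a \<Rightarrow> 'a \<times> 'a" where
  "proj10 J w = cscale (1/2) (w - cscale \<i> (cext J w))"

definition proj01 :: "('a::real_vector \<Rightarrow> 'a) \<Rightarrow> 'a \<times> 'a \<Rightarrow> 'a \<times> 'a" where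
  "proj01 J w = cscale (1/2) (w + cscale \<i> (cext J w))"

definition comp_10_to_01 ::
  "('e::real_vector \<Rightarrow> 'e) \<Rightarrow> ('e \<times> 'e \<Rightarrow> 'e \<times> 'e) \<Rightarrow> 'e \<times> 'e \<Rightarrow> 'e \<times> 'e" where
  "comp_10_to_01 I A = proj01 I \<circ> A \<circ> proj10 I"

definition induces_complex_rep_10 ::
  "('g::real_vector \<Rightarrow> 'g \<Rightarrow> 'g) \<Rightarrow> ('g \<Rightarrow> 'g) \<Rightarrow> ('e::real_vector \<Rightarrow> 'e)
     \<Rightarrow> ('g \<Rightarrow> 'e \<Rightarrow> 'e) \<Rightarrow> bool" where
  "induces_complex_rep_10 br J I \<rho> \<longleftrightarrow>
     \<comment> \<open>restriction is well defined: E^{1,0} is mapped into itself\<close>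
     (\<forall>X\<in>hol_part J. \<forall>w\<in>hol_part I. rhoC \<rho> X w \<in> hol_part I) \<and>
     \<comment> \<open>each rho(X) restricted to E^{1,0} is C-linear\<close>
     (\<forall>X\<in>hol_part J. \<forall>v\<in>hol_part I. \<forall>w\<in>hol_part I. \<forall>c.
        rhoC \<rho> X (v + w) = rhoC \<rho> X v + rhoC \<rho> X w \<and>
        rhoC \<rho> X (cscale c w) = cscale c (rhoC \<rho> X w)) \<and>
     \<comment> \<open>X \<mapsto> rho(X)|E^{1,0} is C-linear on g^{1,0}\<close>
     (\<forall>X\<in>hol_part J. \<forall>Y\<in>hol_part J. \<forall>w\<in>hol_part I. \<forall>c.
        rhoC \<rho> (X + Y) w = rhoC \<rho> X w + rhoC \<rho> Y w \<and>
        rhoC \<rho> (cscale c X) w = cscale c (rhoC \<rho> X w)) \<and>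
     \<comment> \<open>g^{1,0} is a (complex) Lie subalgebra and the restriction respects brackets\<close>
     (\<forall>X\<in>hol_part J. \<forall>Y\<in>hol_part J. bracketC br X Y \<in> hol_part J \<and>
        (\<forall>w\<in>hol_part I. rhoC \<rho> (bracketC br X Y) w
            = rhoC \<rho> X (rhoC \<rho> Y w) - rhoC \<rho> Y (rhoC \<rho> X w)))"

end

theory Submission imports Defs begin
locale cstr = fixes K :: "'a::real_vector \<Rightarrow> 'a" assumes c: "complex_structure K"
begin
lemma lin: "linear K" using c by (simp add: complex_structure_def)
lemma add[simp]: "K (a+b) = K a + K b" by (rule linear_add[OF lin])
lemma neg[simp]: "K (-a) = - K a" by (rule linear_neg[OF lin])
lemma diff[simp]: "K (a-b) = K a - K b" by (rule linear_diff[OF lin])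
lemma scl[simp]: "K (r *\<^sub>R a) = r *\<^sub>R K a" by (rule linear_scale[OF lin])
lemma zero[simp]: "K 0 = 0" by (rule linear_0[OF lin])
lemma KK[simp]: "K (K a) = -a" using c by (simp add: complex_structure_def)
lemma inj: "K a = K b \<Longrightarrow> a = b" by (metis KK minus_equation_iff)

lemma hol_iff: "w \<in> hol_part K \<longleftrightarrow> snd w = - K (fst w)"
proof -
  obtain a b where w: "w = (a,b)" by force
  have "w \<in> hol_part K \<longleftrightarrow> K a = - b \<and> K b = a" unfolding w hol_part_def cext_def cscale_def by auto
  also have "\<dots> \<longleftrightarrow> b = - K a" by (metis KK neg minus_minus)
  finally show ?thesis using w by simp
qed

lemma p01: "proj01 K z = 0 \<longleftrightarrow> z \<in> hol_part K"
proof -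
  obtain c d where z: "z = (c,d)" by force
  have "proj01 K z = ((1/2) *\<^sub>R (c - K d), (1/2) *\<^sub>R (d + K c))"
    unfolding z proj01_def cscale_def cext_def by (simp add: algebra_simps)
  moreover have "(c - K d = 0 \<and> d + K c = 0) \<longleftrightarrow> d = - K c"
    by (metis KK neg minus_minus add_eq_0_iff eq_iff_diff_eq_0)
  ultimately show ?thesis using hol_iff z by (auto simp: zero_prod_def)
qed

lemma p10a: "proj10 K w \<in> hol_part K" and p10b: "w \<in> hol_part K \<Longrightarrow> proj10 K w = w"
proof -
  obtain c d where z: "w = (c,d)" by force
  have e: "proj10 K w = ((1/2) *\<^sub>R (c + K d), (1/2) *\<^sub>R (d - K c))"
    unfolding z proj10_def cscale_def cext_def by (simp add: algebra_simps)
  show "proj10 K w \<in> hol_part K" unfolding hol_iff e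
    by (simp add: algebra_simps)
  assume "w \<in> hol_part K"
  then have "d = - K c" using hol_iff z by auto
  then show "proj10 K w = w" using e z by (simp add: scaleR_2[symmetric] algebra_simps)
qed
end

lemma hol_mem: "complex_structure K \<Longrightarrow> X \<in> hol_part K \<longleftrightarrow> X = (fst X, - K (fst X))"
  using cstr.hol_iff[of K X] by (auto simp: cstr_def prod_eq_iff)

theorem mainTheorem2:
  fixes br :: "'g::real_vector \<Rightarrow> 'g \<Rightarrow> 'g" and J :: "'g \<Rightarrow> 'g"
    and I :: "'e::real_vector \<Rightarrow> 'e" and \<rho> :: "'g \<Rightarrow> 'e \<Rightarrow> 'e"
  assumes "real_lie_algebra br"
    and "integrable_complex_structure br J"
    and "complex_structure I"
    and "representation br \<rho>"
  shows "(integrable_rep J I \<rho> \<longleftrightarrow>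
           (\<forall>X\<in>hol_part J. comp_10_to_01 I (rhoC \<rho> X) = (\<lambda>_. 0))) \<and>
         ((\<forall>X\<in>hol_part J. comp_10_to_01 I (rhoC \<rho> X) = (\<lambda>_. 0)) \<longleftrightarrow>
           (\<forall>X\<in>hol_part J. \<forall>w\<in>hol_part I. rhoC \<rho> X w \<in> hol_part I)) \<and>
         ((\<forall>X\<in>hol_part J. \<forall>w\<in>hol_part I. rhoC \<rho> X w \<in> hol_part I) \<longleftrightarrow>
           induces_complex_rep_10 br J I \<rho>)"
proof -
  interpret I: cstr I using assms(3) by unfold_locales
  have cJ: "complex_structure J" using assms(2) unfolding integrable_complex_structure_def by blast
  interpret J: cstr J using cJ by unfold_locales
  have intJ: "\<And>x y. br x y - br (J x) (J y) + J (br (J x) y) + J (br x (J y)) = 0"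
    using assms(2) unfolding integrable_complex_structure_def by blast
  have rl1: "\<And>x. linear (\<rho> x)" and rl2: "\<And>v. linear (\<lambda>x. \<rho> x v)"
    and rbr: "\<And>x y. \<rho> (br x y) = comm (\<rho> x) (\<rho> y)"
    using assms(4) unfolding representation_def by blast+
  have bl1: "\<And>x. linear (br x)" and bl2: "\<And>y. linear (\<lambda>x. br x y)"
    using assms(1) unfolding real_lie_algebra_def by blast+
  have r1: "\<rho> x (a+b) = \<rho> x a + \<rho> x b" "\<rho> x (-a) = - \<rho> x a" "\<rho> x (a-b) = \<rho> x a - \<rho> x b"
    "\<rho> x (r *\<^sub>R a) = r *\<^sub>R \<rho> x a" for x a b r
    by (rule linear_add[OF rl1], rule linear_neg[OF rl1], rule linear_diff[OF rl1], rule linear_scale[OF rl1])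
  have r2: "\<rho> (x+y) a = \<rho> x a + \<rho> y a" "\<rho> (-x) a = - \<rho> x a" "\<rho> (x-y) a = \<rho> x a - \<rho> y a"
    "\<rho> (r *\<^sub>R x) a = r *\<^sub>R \<rho> x a" for x y a r
    by (rule linear_add[OF rl2], rule linear_neg[OF rl2], rule linear_diff[OF rl2], rule linear_scale[OF rl2])
  have b1: "br x (a+b) = br x a + br x b" "br x (-a) = - br x a" "br x (a-b) = br x a - br x b"
    for x a b
    by (rule linear_add[OF bl1], rule linear_neg[OF bl1], rule linear_diff[OF bl1])
  have b2: "br (x+y) a = br x a + br y a" "br (-x) a = - br x a" "br (x-y) a = br x a - br y a"
    for x y a
    by (rule linear_add[OF bl2], rule linear_neg[OF bl2], rule linear_diff[OF bl2])
  note rr = r1 r2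
  have keyI: "I (nijenhuis_rep J I \<rho> x a) =
     (- \<rho> x (I a) - \<rho> (J x) a) - (- I (\<rho> x a - \<rho> (J x) (I a)))" for x a
    unfolding nijenhuis_rep_def comm_def by (simp add: rr algebra_simps)
  have iii_el: "rhoC \<rho> (x, - J x) (a, - I a) \<in> hol_part I \<longleftrightarrow> nijenhuis_rep J I \<rho> x a = 0" for x a
  proof -
    have B: "rhoC \<rho> (x, - J x) (a, - I a) = (\<rho> x a - \<rho> (J x) (I a), - \<rho> x (I a) - \<rho> (J x) a)"
      unfolding rhoC_def by (simp add: rr)
    have "rhoC \<rho> (x, - J x) (a, - I a) \<in> hol_part I \<longleftrightarrow>
       - \<rho> x (I a) - \<rho> (J x) a = - I (\<rho> x a - \<rho> (J x) (I a))"
      unfolding I.hol_iff B fst_conv snd_conv ..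
    also have "\<dots> \<longleftrightarrow> I (nijenhuis_rep J I \<rho> x a) = 0"
      unfolding keyI by (rule eq_iff_diff_eq_0)
    also have "\<dots> \<longleftrightarrow> nijenhuis_rep J I \<rho> x a = 0" using I.inj I.zero by metis
    finally show ?thesis .
  qed
  have iii: "(\<forall>X\<in>hol_part J. \<forall>w\<in>hol_part I. rhoC \<rho> X w \<in> hol_part I) \<longleftrightarrow> integrable_rep J I \<rho>"
  proof
    assume h: "\<forall>X\<in>hol_part J. \<forall>w\<in>hol_part I. rhoC \<rho> X w \<in> hol_part I"
    show "integrable_rep J I \<rho>" unfolding integrable_rep_def
    proof (intro allI)
      fix x a
      have "(x, - J x) \<in> hol_part J" "(a, - I a) \<in> hol_part I"
        by (simp_all add: J.hol_iff I.hol_iff)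
      then have "rhoC \<rho> (x, - J x) (a, - I a) \<in> hol_part I" using h by (simp only: Ball_def)
      then show "nijenhuis_rep J I \<rho> x a = 0" by (simp only: iii_el)
    qed
  next
    assume h: "integrable_rep J I \<rho>"
    show "\<forall>X\<in>hol_part J. \<forall>w\<in>hol_part I. rhoC \<rho> X w \<in> hol_part I"
    proof (intro ballI)
      fix X w assume X: "X \<in> hol_part J" and w: "w \<in> hol_part I"
      have e: "X = (fst X, - J (fst X))" "w = (fst w, - I (fst w))"
        by (rule hol_mem[OF cJ, THEN iffD1, OF X], rule hol_mem[OF assms(3), THEN iffD1, OF w])
      have "nijenhuis_rep J I \<rho> (fst X) (fst w) = 0" using h unfolding integrable_rep_def by blast
      then have "rhoC \<rho> (fst X, - J (fst X)) (fst w, - I (fst w)) \<in> hol_part I" by (simp only: iii_el)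
      then show "rhoC \<rho> X w \<in> hol_part I" by (simp only: e[symmetric])
    qed
  qed
  have ii: "(\<forall>X\<in>hol_part J. comp_10_to_01 I (rhoC \<rho> X) = (\<lambda>_. 0)) \<longleftrightarrow>
           (\<forall>X\<in>hol_part J. \<forall>w\<in>hol_part I. rhoC \<rho> X w \<in> hol_part I)"
  proof -
    have "comp_10_to_01 I (rhoC \<rho> X) = (\<lambda>_. 0) \<longleftrightarrow> (\<forall>w\<in>hol_part I. rhoC \<rho> X w \<in> hol_part I)" for X
    proof
      assume h: "comp_10_to_01 I (rhoC \<rho> X) = (\<lambda>_. 0)"
      show "\<forall>w\<in>hol_part I. rhoC \<rho> X w \<in> hol_part I"
      proof
        fix w assume w: "w \<in> hol_part I"
        have "proj01 I (rhoC \<rho> X (proj10 I w)) = 0" using fun_cong[OF h, of w]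
          unfolding comp_10_to_01_def o_def .
        then have "proj01 I (rhoC \<rho> X w) = 0" unfolding I.p10b[OF w] .
        then show "rhoC \<rho> X w \<in> hol_part I" unfolding I.p01 .
      qed
    next
      assume h: "\<forall>w\<in>hol_part I. rhoC \<rho> X w \<in> hol_part I"
      show "comp_10_to_01 I (rhoC \<rho> X) = (\<lambda>_. 0)"
      proof (rule ext)
        fix w
        have "rhoC \<rho> X (proj10 I w) \<in> hol_part I" using h I.p10a by blast
        then show "comp_10_to_01 I (rhoC \<rho> X) w = 0"
          unfolding comp_10_to_01_def o_def I.p01 .
      qed
    qed
    then show ?thesis by (intro ball_cong refl)
  qed
  have g1: "rhoC \<rho> X (v + w) = rhoC \<rho> X v + rhoC \<rho> X w" for X v w
    by (simp add: rhoC_def rr algebra_simps)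
  have g2: "rhoC \<rho> X (cscale c w) = cscale c (rhoC \<rho> X w)" for X c w
    by (simp add: rhoC_def cscale_def rr algebra_simps)
  have g3: "rhoC \<rho> (X + Y) w = rhoC \<rho> X w + rhoC \<rho> Y w" for X Y w
    by (simp add: rhoC_def rr algebra_simps)
  have g4: "rhoC \<rho> (cscale c X) w = cscale c (rhoC \<rho> X w)" for X c w
    by (simp add: rhoC_def cscale_def rr algebra_simps)
  have g5: "rhoC \<rho> (bracketC br X Y) w = rhoC \<rho> X (rhoC \<rho> Y w) - rhoC \<rho> Y (rhoC \<rho> X w)" for X Y w
    by (simp add: rhoC_def bracketC_def rr rbr comm_def algebra_simps)
  have g6: "bracketC br X Y \<in> hol_part J" if "X \<in> hol_part J" "Y \<in> hol_part J" for X Y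
  proof -
    define x where "x = fst X"
    define y where "y = fst Y"
    have X: "X = (x, - J x)" unfolding x_def by (rule hol_mem[OF cJ, THEN iffD1, OF that(1)])
    have Y: "Y = (y, - J y)" unfolding y_def by (rule hol_mem[OF cJ, THEN iffD1, OF that(2)])
    have "J (br x y - br (J x) (J y) + J (br (J x) y) + J (br x (J y))) = 0"
      by (simp only: intJ J.zero)
    then have "- br x (J y) - br (J x) y = - J (br x y - br (J x) (J y))"
      by (simp add: algebra_simps)
    then show ?thesis unfolding X Y J.hol_iff bracketC_def by (simp add: b1 b2)
  qed
  have iv: "(\<forall>X\<in>hol_part J. \<forall>w\<in>hol_part I. rhoC \<rho> X w \<in> hol_part I) \<longleftrightarrow>
           induces_complex_rep_10 br J I \<rho>"
  proof
    assume h: "\<forall>X\<in>hol_part J. \<forall>w\<in>hol_part I. rhoC \<rho> X w \<in> hol_part I"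
    show "induces_complex_rep_10 br J I \<rho>" unfolding induces_complex_rep_10_def
      apply (intro conjI)
      subgoal by (rule h)
      subgoal by (intro ballI allI conjI g1 g2)
      subgoal by (intro ballI allI conjI g3 g4)
      subgoal by (intro ballI allI conjI g5 g6)
      done
  next
    assume "induces_complex_rep_10 br J I \<rho>"
    then show "\<forall>X\<in>hol_part J. \<forall>w\<in>hol_part I. rhoC \<rho> X w \<in> hol_part I"
      unfolding induces_complex_rep_10_def by (elim conjE)
  qed
  show ?thesis using iii ii iv by (intro conjI) (rule iffI; simp only:)+
qed
end
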